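(* Let $R$ be an integral domain and $B=R[X_1,\dots,X_n]$ the polynomial ring with standard grading $B=\bigoplus_{i\ge0}B_i$ ($B_i$ the homogeneous polynomials of degree $i$, $B_0=R$). Let $A$ be a graded $R$-subalgebra of $B$ (i.e. $A=\bigoplus_{i\ge 0}(A\cap B_i)$), and suppose there is a retraction $\pi:B\to A$ with $\pi(B_+)\subseteq B_+$, where $B_+=\bigoplus_{i\ge1}B_i$. Then there is a finitely generated projective $R$-submodule $M$ of the free module $B_1=RX_1\oplus\cdots\oplus RX_n$ (namely a direct summand of $B_1$) such that $A$ is the $R$-subalgebra of $B$ generated by $M$ and $A\cong\operatorname{Sym}_R(M)$.
   Context: A retraction $\pi:B\to A$ is a ring homomorphism onto the subring $A$ which restricts to the identity on $A$ (equivalently an idempotent endomorphism of $B$ with image $A$); $\pi$ need not be graded. *)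

theory Defs
  imports "HOL-Library.Poly_Mapping"
begin

type_synonym ('v, 'a) mpoly = "('v \<Rightarrow>\<^sub>0 nat) \<Rightarrow>\<^sub>0 'a"

definition mconst :: "'a::zero \<Rightarrow> ('v, 'a) mpoly" where
  "mconst c = Poly_Mapping.single 0 c"

definition mvar :: "'v \<Rightarrow> ('v, 'a::{zero,one}) mpoly" where
  "mvar v = Poly_Mapping.single (Poly_Mapping.single v 1) 1"

definition mdeg :: "('v \<Rightarrow>\<^sub>0 nat) \<Rightarrow> nat" where
  "mdeg m = (\<Sum>v\<in>Poly_Mapping.keys m. Poly_Mapping.lookup m v)"

definition homog :: "nat \<Rightarrow> ('v, 'a::zero) mpoly set" where
  "homog i = {p. \<forall>m\<in>Poly_Mapping.keys p. mdeg m = i}"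

text \<open>B_+ : polynomials with zero constant term (= sum of B_i, i \<ge> 1)\<close>
definition posPart :: "('v, 'a::zero) mpoly set" where
  "posPart = {p. Poly_Mapping.lookup p 0 = 0}"

definition hcomp :: "nat \<Rightarrow> ('v, 'a::comm_monoid_add) mpoly \<Rightarrow> ('v, 'a) mpoly" where
  "hcomp i p = (\<Sum>m\<in>{m\<in>Poly_Mapping.keys p. mdeg m = i}. Poly_Mapping.single m (Poly_Mapping.lookup p m))"

definition r_subalgebra :: "('v, 'a::comm_ring_1) mpoly set \<Rightarrow> bool" where
  "r_subalgebra A \<longleftrightarrow> (\<forall>c. mconst c \<in> A) \<and> (\<forall>p\<in>A. \<forall>q\<in>A. p + q \<in> A \<and> p * q \<in> A)"

text \<open>graded: A is the direct sum of its intersections with the B_i\<close>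
definition graded_set :: "('v, 'a::comm_ring_1) mpoly set \<Rightarrow> bool" where
  "graded_set A \<longleftrightarrow> (\<forall>p\<in>A. \<forall>i. hcomp i p \<in> A)"

definition retraction :: "(('v, 'a::comm_ring_1) mpoly \<Rightarrow> ('v, 'a) mpoly) \<Rightarrow> ('v, 'a) mpoly set \<Rightarrow> bool" where
  "retraction \<pi> A \<longleftrightarrow> (\<forall>p q. \<pi> (p + q) = \<pi> p + \<pi> q) \<and> (\<forall>p q. \<pi> (p * q) = \<pi> p * \<pi> q)
      \<and> \<pi> 1 = 1 \<and> range \<pi> = A \<and> (\<forall>a\<in>A. \<pi> a = a)"

definition r_submodule :: "('v, 'a::comm_ring_1) mpoly set \<Rightarrow> bool" where
  "r_submodule M \<longleftrightarrow> 0 \<in> M \<and> (\<forall>p\<in>M. \<forall>q\<in>M. p + q \<in> M) \<and> (\<forall>c. \<forall>p\<in>M. mconst c * p \<in> M)"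

definition direct_summand_B1 :: "('v, 'a::comm_ring_1) mpoly set \<Rightarrow> bool" where
  "direct_summand_B1 M \<longleftrightarrow> r_submodule M \<and> M \<subseteq> homog 1 \<and>
     (\<exists>N. r_submodule N \<and> N \<subseteq> homog 1 \<and> M \<inter> N = {0} \<and>
          (\<forall>p\<in>homog 1. \<exists>a\<in>M. \<exists>b\<in>N. p = a + b))"

inductive_set alg_gen :: "('v, 'a::comm_ring_1) mpoly set \<Rightarrow> ('v, 'a) mpoly set"
  for S where
  gen_const: "mconst c \<in> alg_gen S"
| gen_base: "s \<in> S \<Longrightarrow> s \<in> alg_gen S"
| gen_add: "p \<in> alg_gen S \<Longrightarrow> q \<in> alg_gen S \<Longrightarrow> p + q \<in> alg_gen S"
| gen_mult: "p \<in> alg_gen S \<Longrightarrow> q \<in> alg_gen S \<Longrightarrow> p * q \<in> alg_gen S"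

text \<open>Symmetric algebra Sym_R(M) presented as R[x_m : m \<in> M] modulo the ideal
  generated by x_(m+m') - x_m - x_m' and x_(c m) - c x_m.
  Variables of the big polynomial ring are indexed by elements of B.\<close>

definition sym_polys :: "('w set) \<Rightarrow> ('w, 'a::zero) mpoly set" where
  "sym_polys M = {q. \<forall>m\<in>Poly_Mapping.keys q. Poly_Mapping.keys m \<subseteq> M}"

definition sym_gens :: "('v, 'a::comm_ring_1) mpoly set \<Rightarrow> (('v, 'a) mpoly, 'a) mpoly set" where
  "sym_gens M = {mvar (m + m') - mvar m - mvar m' | m m'. m \<in> M \<and> m' \<in> M}
              \<union> {mvar (mconst c * m) - mconst c * mvar m | c m. m \<in> M}"

inductive_set sym_ideal :: "('v, 'a::comm_ring_1) mpoly set \<Rightarrow> (('v, 'a) mpoly, 'a) mpoly set"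
  for M where
  ideal_zero: "0 \<in> sym_ideal M"
| ideal_step: "q \<in> sym_ideal M \<Longrightarrow> g \<in> sym_gens M \<Longrightarrow> a \<in> sym_polys M \<Longrightarrow> q + a * g \<in> sym_ideal M"

definition peval :: "('w \<Rightarrow> ('v, 'a::comm_ring_1) mpoly) \<Rightarrow> ('w, 'a) mpoly \<Rightarrow> ('v, 'a) mpoly" where
  "peval f q = (\<Sum>m\<in>Poly_Mapping.keys q. mconst (Poly_Mapping.lookup q m) * (\<Prod>v\<in>Poly_Mapping.keys m. f v ^ Poly_Mapping.lookup m v))"

text \<open>The canonical R-algebra map Sym_R(M) \<rightarrow> B, x_m \<mapsto> m, is an isomorphism onto A:
  its image is A and its kernel is exactly the defining ideal of Sym_R(M).\<close>
definition sym_iso :: "('v, 'a::comm_ring_1) mpoly set \<Rightarrow> ('v, 'a) mpoly set \<Rightarrow> bool" where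
  "sym_iso M A \<longleftrightarrow> peval id ` sym_polys M = A \<and>
     (\<forall>q\<in>sym_polys M. peval id q = 0 \<longleftrightarrow> q \<in> sym_ideal M)"

end

theory Submission
  imports Defs
begin

abbreviation lk where "lk \<equiv> Poly_Mapping.lookup"
abbreviation ks where "ks \<equiv> Poly_Mapping.keys"
abbreviation sg where "sg \<equiv> Poly_Mapping.single"

lemma expand_superset:
  fixes p :: "'k \<Rightarrow>\<^sub>0 'b::comm_monoid_add"
  assumes "finite S" "ks p \<subseteq> S"
  shows "(\<Sum>k\<in>S. sg k (lk p k)) = p"
proof (rule poly_mapping_eqI)
  fix x
  have "lk (\<Sum>k\<in>S. sg k (lk p k)) x = (\<Sum>k\<in>S. lk (sg k (lk p k)) x)" by (simp add: lookup_sum)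
  also have "\<dots> = (\<Sum>k\<in>S. if k = x then lk p x else 0)"
    by (rule sum.cong) (auto simp: lookup_single)
  also have "\<dots> = lk p x" using assms by (auto simp: in_keys_iff)
  finally show "lk (\<Sum>k\<in>S. sg k (lk p k)) x = lk p x" .
qed

lemma expand: "(\<Sum>k\<in>ks p. sg k (lk p k)) = (p :: 'k \<Rightarrow>\<^sub>0 'b::comm_monoid_add)"
  by (rule expand_superset) auto

lemma mconst_add: "mconst (a + b) = mconst a + mconst b"
  by (simp add: mconst_def single_add)
lemma mconst_zero[simp]: "mconst 0 = 0" by (simp add: mconst_def)
lemma mconst_one[simp]: "mconst 1 = 1" by (simp add: mconst_def)
lemma mconst_mult: "mconst (a * b) = (mconst a * mconst b :: ('v,'a::comm_ring_1) mpoly)"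
  by (simp add: mconst_def mult_single)
lemma mconst_single: "mconst c * sg k a = (sg k (c * a) :: ('v,'a::comm_ring_1) mpoly)"
  by (simp add: mconst_def mult_single)
lemma mconst_uminus: "mconst (- a) = (- mconst a :: ('v,'a::comm_ring_1) mpoly)"
  by (simp add: mconst_def single_uminus)
lemma mconst_diff: "mconst (a - b) = (mconst a - mconst b :: ('v,'a::comm_ring_1) mpoly)"
  by (simp add: mconst_def single_diff)
lemma mconst_sum: "mconst (sum f S) = (\<Sum>x\<in>S. mconst (f x) :: ('v,'a::comm_ring_1) mpoly)"
  by (induction S rule: infinite_finite_induct) (auto simp: mconst_add)
lemma lookup_mconst_mult: "lk (mconst c * (p::('v,'a::comm_ring_1) mpoly)) k = c * lk p k"
proof -
  have "mconst c * p = (\<Sum>m\<in>ks p. mconst c * sg m (lk p m))"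
    by (subst expand[symmetric, of p]) (simp add: sum_distrib_left)
  also have "\<dots> = (\<Sum>m\<in>ks p. sg m (c * lk p m))" by (simp add: mconst_single)
  finally have "lk (mconst c * p) k = (\<Sum>m\<in>ks p. lk (sg m (c * lk p m)) k)"
    by (simp add: lookup_sum)
  also have "\<dots> = (\<Sum>m\<in>ks p. if m = k then c * lk p k else 0)"
    by (rule sum.cong) (auto simp: lookup_single)
  also have "\<dots> = c * lk p k" by (auto simp: in_keys_iff)
  finally show ?thesis .
qed
lemma keys_mconst_mult: "ks (mconst c * (p::('v,'a::comm_ring_1) mpoly)) \<subseteq> ks p"
  by (auto simp: in_keys_iff lookup_mconst_mult)

definition mon :: "('w \<Rightarrow> ('v, 'a::comm_ring_1) mpoly) \<Rightarrow> ('w \<Rightarrow>\<^sub>0 nat) \<Rightarrow> ('v,'a) mpoly" where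
  "mon f m = (\<Prod>v\<in>ks m. f v ^ lk m v)"

lemma mon_superset: "finite T \<Longrightarrow> ks m \<subseteq> T \<Longrightarrow> mon f m = (\<Prod>v\<in>T. f v ^ lk m v)"
  unfolding mon_def by (rule prod.mono_neutral_left) (auto simp: in_keys_iff)

lemma mon_zero[simp]: "mon f 0 = 1" by (simp add: mon_def)

lemma mon_add: "mon f (a + b) = mon f a * mon f b"
proof -
  let ?T = "ks a \<union> ks b"
  have "mon f (a+b) = (\<Prod>v\<in>?T. f v ^ lk (a+b) v)" by (rule mon_superset) (auto dest: keys_add[THEN subsetD])
  also have "\<dots> = (\<Prod>v\<in>?T. f v ^ lk a v * f v ^ lk b v)" by (simp add: lookup_add power_add)
  also have "\<dots> = mon f a * mon f b"
    by (simp add: prod.distrib mon_superset[of ?T a] mon_superset[of ?T b])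
  finally show ?thesis .
qed

lemma mon_single1: "mon f (sg v 1) = f v" unfolding mon_def by simp

lemma peval_superset: "finite S \<Longrightarrow> ks q \<subseteq> S \<Longrightarrow> peval f q = (\<Sum>m\<in>S. mconst (lk q m) * mon f m)"
  unfolding peval_def mon_def by (rule sum.mono_neutral_left) (auto simp: in_keys_iff)

lemma peval_zero[simp]: "peval f 0 = 0" by (simp add: peval_def)

lemma peval_add: "peval f (p + q) = peval f p + peval f q"
proof -
  let ?S = "ks p \<union> ks q"
  have "peval f (p+q) = (\<Sum>m\<in>?S. mconst (lk (p+q) m) * mon f m)"
    by (rule peval_superset) (auto dest: keys_add[THEN subsetD])
  also have "\<dots> = (\<Sum>m\<in>?S. mconst (lk p m) * mon f m + mconst (lk q m) * mon f m)"
    by (simp add: lookup_add mconst_add distrib_right)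
  also have "\<dots> = peval f p + peval f q"
    by (simp add: sum.distrib peval_superset[of ?S p] peval_superset[of ?S q])
  finally show ?thesis .
qed

lemma peval_single: "peval f (sg m c) = mconst c * mon f m"
  by (simp add: peval_def mon_def)

lemma peval_sum: "peval f (sum g S) = (\<Sum>x\<in>S. peval f (g x))"
  by (induction S rule: infinite_finite_induct) (auto simp: peval_add)

lemma peval_mult: "peval f (p * q) = peval f p * peval f q"
proof -
  have "p * q = (\<Sum>a\<in>ks p. sg a (lk p a)) * (\<Sum>b\<in>ks q. sg b (lk q b))" by (simp add: expand)
  also have "\<dots> = (\<Sum>a\<in>ks p. \<Sum>b\<in>ks q. sg (a+b) (lk p a * lk q b))"
    by (simp add: sum_product mult_single)
  finally have "peval f (p*q) = (\<Sum>a\<in>ks p. \<Sum>b\<in>ks q. mconst (lk p a * lk q b) * mon f (a+b))"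
    by (simp add: peval_sum peval_single)
  also have "\<dots> = (\<Sum>a\<in>ks p. \<Sum>b\<in>ks q. (mconst (lk p a) * mon f a) * (mconst (lk q b) * mon f b))"
    by (simp add: mconst_mult mon_add mult_ac)
  also have "\<dots> = peval f p * peval f q" by (simp add: peval_def mon_def sum_product)
  finally show ?thesis .
qed

lemma peval_mconst: "peval f (mconst c) = mconst c"
  by (simp add: mconst_def peval_single)

lemma peval_one[simp]: "peval f 1 = 1"
  using peval_mconst[of f 1] by simp

lemma peval_mvar: "peval f (mvar v) = f v"
  unfolding mvar_def peval_single mon_single1 by simp

lemma peval_uminus: "peval f (- p) = - peval f p"
  using peval_add[of f "-p" p] by (simp add: eq_neg_iff_add_eq_0)

lemma peval_diff: "peval f (p - q) = peval f p - peval f q"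
  using peval_add[of f p "-q"] peval_uminus[of f q] by simp

lemma peval_pow: "peval f (p ^ n) = peval f p ^ n"
  by (induction n) (auto simp: peval_mult)

lemma peval_prod: "peval f (prod g S) = (\<Prod>x\<in>S. peval f (g x))"
  by (induction S rule: infinite_finite_induct) (auto simp: peval_mult)

lemma lookup_hcomp: "lk (hcomp i p) m = (if mdeg m = i then lk p m else 0)"
proof -
  have "lk (hcomp i p) m = (\<Sum>k\<in>{k\<in>ks p. mdeg k = i}. lk (sg k (lk p k)) m)"
    by (simp add: hcomp_def lookup_sum)
  also have "\<dots> = (\<Sum>k\<in>{k\<in>ks p. mdeg k = i}. if k = m then lk p m else 0)"
    by (rule sum.cong) (auto simp: lookup_single)
  also have "\<dots> = (if mdeg m = i then lk p m else 0)" by (auto simp: in_keys_iff)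
  finally show ?thesis .
qed

lemma hcomp_add: "hcomp i (p + q) = hcomp i p + hcomp i q"
  by (rule poly_mapping_eqI) (simp add: lookup_hcomp lookup_add)
lemma hcomp_zero[simp]: "hcomp i 0 = 0"
  by (rule poly_mapping_eqI) (simp add: lookup_hcomp)
lemma hcomp_uminus: "hcomp i (- p) = - hcomp i (p :: ('v,'a::ab_group_add) mpoly)"
  by (rule poly_mapping_eqI) (simp add: lookup_hcomp)
lemma hcomp_diff: "hcomp i (p - q) = hcomp i p - hcomp i (q :: ('v,'a::ab_group_add) mpoly)"
  by (rule poly_mapping_eqI) (simp add: lookup_hcomp lookup_minus)
lemma hcomp_sum: "hcomp i (sum g S) = (\<Sum>x\<in>S. hcomp i (g x))"
  by (induction S rule: infinite_finite_induct) (auto simp: hcomp_add)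
lemma hcomp_mconst_mult: "hcomp i (mconst c * p) = mconst c * hcomp i (p :: ('v,'a::comm_ring_1) mpoly)"
  by (rule poly_mapping_eqI) (simp add: lookup_hcomp lookup_mconst_mult)

lemma hcomp_homog: "hcomp i p \<in> homog i"
  by (auto simp: homog_def in_keys_iff lookup_hcomp split: if_splits)

lemma homog_hcomp_same: "p \<in> homog i \<Longrightarrow> hcomp i p = p"
  by (rule poly_mapping_eqI) (auto simp: lookup_hcomp homog_def in_keys_iff)
lemma homog_hcomp_other: "p \<in> homog j \<Longrightarrow> j \<noteq> i \<Longrightarrow> hcomp i p = 0"
  by (rule poly_mapping_eqI) (auto simp: lookup_hcomp homog_def in_keys_iff)

lemma mdeg_univ: "mdeg (m :: ('v::finite) \<Rightarrow>\<^sub>0 nat) = (\<Sum>v\<in>UNIV. lk m v)"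
  unfolding mdeg_def by (rule sum.mono_neutral_left) (auto simp: in_keys_iff)

lemma mdeg_add: "mdeg ((a :: ('v::finite) \<Rightarrow>\<^sub>0 nat) + b) = mdeg a + mdeg b"
  by (simp add: mdeg_univ lookup_add sum.distrib)

lemma mdeg_zero_iff: "mdeg m = 0 \<longleftrightarrow> m = 0"
proof
  assume "mdeg m = 0"
  then have "\<forall>v\<in>ks m. lk m v = 0" unfolding mdeg_def by simp
  then show "m = 0" by (intro poly_mapping_eqI) (metis in_keys_iff lookup_zero)
qed (simp add: mdeg_def)

lemma mdeg_single: "mdeg (sg v n) = n"
  by (simp add: mdeg_def)

lemma mdeg_one: "mdeg (k :: ('v::finite) \<Rightarrow>\<^sub>0 nat) = 1 \<Longrightarrow> \<exists>u. k = sg u 1"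
proof -
  assume d: "mdeg k = 1"
  then have "k \<noteq> 0" by (metis mdeg_zero_iff zero_neq_one)
  then obtain u where u: "u \<in> ks k" by (metis all_not_in_conv keys_eq_empty)
  have "(\<Sum>v\<in>UNIV. lk k v) = lk k u + (\<Sum>v\<in>UNIV-{u}. lk k v)"
    by (simp add: sum.remove)
  then have eq: "lk k u + (\<Sum>v\<in>UNIV-{u}. lk k v) = 1" using d by (simp add: mdeg_univ)
  have "lk k u \<noteq> 0" using u by (simp add: in_keys_iff)
  then have "lk k u = 1" and s0: "(\<Sum>v\<in>UNIV-{u}. lk k v) = 0" using eq by arith+
  have "\<forall>v\<in>UNIV-{u}. lk k v = 0" using s0 sum_eq_0_iff[of "UNIV-{u}" "lk k"] by simp
  then have "\<forall>v. v \<noteq> u \<longrightarrow> lk k v = 0" by auto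
  then have "k = sg u 1"
    by (intro poly_mapping_eqI) (auto simp: lookup_single \<open>lk k u = 1\<close> when_def)
  then show ?thesis ..
qed

lemma homog_mult:
  fixes p q :: "('v::finite, 'a::comm_ring_1) mpoly"
  assumes "p \<in> homog i" "q \<in> homog j" shows "p * q \<in> homog (i + j)"
  using assms keys_mult[of p q] by (auto simp: homog_def mdeg_add)

lemma homog_add: "p \<in> homog i \<Longrightarrow> q \<in> homog i \<Longrightarrow> p + q \<in> homog i"
  using keys_add[of p q] by (auto simp: homog_def)

lemma hcomp_decomp:
  assumes "\<forall>m\<in>ks p. mdeg m \<le> N"
  shows "p = (\<Sum>i\<le>N. hcomp i p)"
proof (rule poly_mapping_eqI)
  fix m
  have "lk (\<Sum>i\<le>N. hcomp i p) m = (\<Sum>i\<le>N. if mdeg m = i then lk p m else 0)"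
    by (simp add: lookup_sum lookup_hcomp)
  also have "\<dots> = lk p m" using assms by (auto simp: in_keys_iff)
  finally show "lk p m = lk (\<Sum>i\<le>N. hcomp i p) m" by simp
qed

lemma exists_bound: "\<exists>N. \<forall>m\<in>ks p. mdeg m \<le> N"
  by (rule exI[of _ "Max (mdeg ` ks p)"]) auto

lemma posPart_hcomp0: "p \<in> posPart \<Longrightarrow> hcomp 0 p = 0"
  by (rule poly_mapping_eqI) (auto simp: lookup_hcomp posPart_def mdeg_zero_iff)

lemma hcomp_mult:
  fixes u w :: "('v::finite, 'a::comm_ring_1) mpoly"
  assumes "\<forall>m\<in>ks u. mdeg m \<le> N" "\<forall>m\<in>ks w. mdeg m \<le> N"
  shows "hcomp d (u * w) = (\<Sum>i\<le>N. \<Sum>j\<le>N. if i + j = d then hcomp i u * hcomp j w else 0)"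
proof -
  have "u * w = (\<Sum>i\<le>N. hcomp i u) * (\<Sum>j\<le>N. hcomp j w)"
    using hcomp_decomp[OF assms(1)] hcomp_decomp[OF assms(2)] by simp
  also have "\<dots> = (\<Sum>i\<le>N. \<Sum>j\<le>N. hcomp i u * hcomp j w)" by (simp add: sum_product)
  finally have "hcomp d (u*w) = (\<Sum>i\<le>N. \<Sum>j\<le>N. hcomp d (hcomp i u * hcomp j w))"
    by (simp add: hcomp_sum)
  also have "\<dots> = (\<Sum>i\<le>N. \<Sum>j\<le>N. if i + j = d then hcomp i u * hcomp j w else 0)"
  proof (intro sum.cong refl)
    fix i j
    have h: "hcomp i u * hcomp j w \<in> homog (i+j)" by (intro homog_mult hcomp_homog)
    show "hcomp d (hcomp i u * hcomp j w) = (if i + j = d then hcomp i u * hcomp j w else 0)"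
      using homog_hcomp_same[OF h] homog_hcomp_other[OF h] by auto
  qed
  finally show ?thesis .
qed

lemma homog0_const: "p \<in> homog 0 \<Longrightarrow> p = mconst (lk p 0)"
  by (rule poly_mapping_eqI) (auto simp: homog_def mconst_def lookup_single mdeg_zero_iff in_keys_iff when_def)

lemma mvar_homog1: "mvar v \<in> homog 1"
  by (simp add: mvar_def homog_def mdeg_single)

lemma sg_nonzero: "sg v (1::nat) \<noteq> 0" by (metis lookup_single_eq lookup_zero one_neq_zero)

lemma mvar_posPart: "mvar v \<in> posPart"
  using sg_nonzero[of v] by (simp add: mvar_def posPart_def lookup_single when_def)

lemma mconst_homog: "p \<in> homog i \<Longrightarrow> mconst c * (p::('v,'a::comm_ring_1) mpoly) \<in> homog i"
  using keys_mconst_mult by (fastforce simp: homog_def)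

lemma uminus_homog: "p \<in> homog i \<Longrightarrow> - (p::('v,'a::ab_group_add) mpoly) \<in> homog i"
  by (simp add: homog_def)

lemma keys_add_nat: "ks ((a::'w \<Rightarrow>\<^sub>0 nat) + b) = ks a \<union> ks b"
  by (auto simp: in_keys_iff lookup_add)

lemma sp_add: "p \<in> sym_polys M \<Longrightarrow> q \<in> sym_polys M \<Longrightarrow> p + q \<in> sym_polys M"
  using keys_add[of p q] by (auto simp: sym_polys_def)
lemma sp_mult: "p \<in> sym_polys M \<Longrightarrow> q \<in> sym_polys M \<Longrightarrow> p * (q::('w,'a::comm_ring_1) mpoly) \<in> sym_polys M"
  using keys_mult[of p q] by (fastforce simp: sym_polys_def keys_add_nat)
lemma sp_uminus: "p \<in> sym_polys M \<Longrightarrow> - (p::('w,'a::ab_group_add) mpoly) \<in> sym_polys M"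
  by (simp add: sym_polys_def)
lemma sp_diff: "p \<in> sym_polys M \<Longrightarrow> q \<in> sym_polys M \<Longrightarrow> p - (q::('w,'a::ab_group_add) mpoly) \<in> sym_polys M"
  using keys_diff[of p q] by (auto simp: sym_polys_def)
lemma sp_mconst: "mconst c \<in> sym_polys M"
  by (simp add: sym_polys_def mconst_def)
lemma sp_zero: "0 \<in> sym_polys M" by (simp add: sym_polys_def)
lemma sp_one: "1 \<in> sym_polys M" by (simp add: sym_polys_def)
lemma sp_mvar: "m \<in> M \<Longrightarrow> mvar m \<in> sym_polys M" by (simp add: sym_polys_def mvar_def)
lemma sp_sum: "(\<And>x. x \<in> S \<Longrightarrow> f x \<in> sym_polys M) \<Longrightarrow> sum f S \<in> sym_polys M"
  by (induction S rule: infinite_finite_induct) (auto intro: sp_add sp_zero)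
lemma sp_prod: "(\<And>x. x \<in> S \<Longrightarrow> f x \<in> sym_polys M) \<Longrightarrow> prod f S \<in> sym_polys (M::'w set) \<and> True" for f :: "_ \<Rightarrow> ('w,'a::comm_ring_1) mpoly"
  by (induction S rule: infinite_finite_induct) (auto intro: sp_mult sp_one)
lemma sp_pow: "p \<in> sym_polys M \<Longrightarrow> p ^ n \<in> sym_polys M" for p :: "('w,'a::comm_ring_1) mpoly"
  by (induction n) (auto intro: sp_mult sp_one)

lemma I_add: "q \<in> sym_ideal M \<Longrightarrow> p \<in> sym_ideal M \<Longrightarrow> p + q \<in> sym_ideal M"
proof (induction q rule: sym_ideal.induct)
  case ideal_zero then show ?case by simp
next
  case (ideal_step q g a)
  then have "(p + q) + a * g \<in> sym_ideal M" by (intro sym_ideal.ideal_step) auto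
  then show ?case by (simp add: add.assoc)
qed

lemma I_mult: "q \<in> sym_ideal M \<Longrightarrow> c \<in> sym_polys M \<Longrightarrow> c * q \<in> sym_ideal M"
proof (induction q rule: sym_ideal.induct)
  case ideal_zero then show ?case by (simp add: sym_ideal.ideal_zero)
next
  case (ideal_step q g a)
  then have "c * q + (c * a) * g \<in> sym_ideal M" by (intro sym_ideal.ideal_step sp_mult) auto
  then show ?case by (simp add: distrib_left mult.assoc)
qed

lemma I_uminus: assumes "q \<in> sym_ideal M" shows "- q \<in> sym_ideal M"
proof -
  have "(-1) * q \<in> sym_ideal M" by (rule I_mult[OF assms]) (intro sp_uminus sp_one)
  then show ?thesis by simp
qed

lemma I_diff: assumes "p \<in> sym_ideal M" "q \<in> sym_ideal M" shows "p - q \<in> sym_ideal M"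
proof -
  have "p + (- q) \<in> sym_ideal M" by (rule I_add[OF I_uminus[OF assms(2)] assms(1)])
  then show ?thesis by simp
qed

lemma I_gen: assumes "g \<in> sym_gens M" shows "g \<in> sym_ideal M"
proof -
  have "0 + 1 * g \<in> sym_ideal M"
    by (rule sym_ideal.ideal_step[OF sym_ideal.ideal_zero]) (auto intro: sp_one assms)
  then show ?thesis by simp
qed

lemma I_sum: "(\<And>x. x \<in> S \<Longrightarrow> f x \<in> sym_ideal M) \<Longrightarrow> sum f S \<in> sym_ideal M"
  by (induction S rule: infinite_finite_induct) (auto intro: I_add sym_ideal.ideal_zero)

lemma I_pow:
  assumes "a - b \<in> sym_ideal M" "a \<in> sym_polys M" "b \<in> sym_polys M"
  shows "a ^ n - b ^ n \<in> sym_ideal M"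
proof (induction n)
  case 0 then show ?case by (simp add: sym_ideal.ideal_zero)
next
  case (Suc n)
  have "a ^ Suc n - b ^ Suc n = a * (a ^ n - b ^ n) + b ^ n * (a - b)"
    by (simp add: algebra_simps)
  then show ?case using Suc assms by (auto intro!: I_add I_mult sp_pow)
qed

lemma I_prod:
  assumes "\<And>x. x \<in> S \<Longrightarrow> f x - g x \<in> sym_ideal M \<and> f x \<in> sym_polys M \<and> g x \<in> sym_polys M"
  shows "prod f S - prod g S \<in> sym_ideal M"
  using assms
proof (induction S rule: infinite_finite_induct)
  case (insert x F)
  have "prod f (insert x F) - prod g (insert x F) = f x * (prod f F - prod g F) + prod g F * (f x - g x)"
    using insert by (simp add: algebra_simps)
  moreover have "prod g F \<in> sym_polys M" using insert sp_prod[of F g M] by auto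
  ultimately show ?case using insert by (auto intro!: I_add I_mult)
qed (auto simp: sym_ideal.ideal_zero)

lemma mvar_pow: "mvar v ^ n = (sg (sg v n) 1 :: ('w,'a::comm_ring_1) mpoly)"
proof (induction n)
  case 0 then show ?case by simp
next
  case (Suc n)
  have "mvar v ^ Suc n = mvar v * mvar v ^ n" by simp
  also have "\<dots> = sg (sg v 1) 1 * (sg (sg v n) 1 :: ('w,'a) mpoly)" by (subst Suc.IH) (simp add: mvar_def)
  also have "\<dots> = sg (sg v (Suc n)) 1" by (simp add: mult_single single_add[symmetric])
  finally show ?case .
qed

lemma prod_single1: "(\<Prod>x\<in>S. sg (h x) 1) = (sg (sum h S) 1 :: ('w,'a::comm_ring_1) mpoly)"
  by (induction S rule: infinite_finite_induct) (auto simp: mult_single)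

lemma mon_mvar: "mon mvar m = (sg m 1 :: ('w,'a::comm_ring_1) mpoly)"
  unfolding mon_def by (simp add: mvar_pow prod_single1 expand)

lemma peval_mvar_id: "peval mvar q = (q :: ('w,'a::comm_ring_1) mpoly)"
proof -
  have "peval mvar q = (\<Sum>m\<in>ks q. sg m (lk q m))"
    unfolding peval_def mon_def[symmetric] mon_mvar by (simp add: mconst_single)
  then show ?thesis by (simp add: expand)
qed

lemma peval_sp: "(\<And>u. f u \<in> sym_polys M) \<Longrightarrow> peval f q \<in> sym_polys M"
  unfolding peval_def by (intro sp_sum sp_mult sp_mconst conjunct1[OF sp_prod] sp_pow) auto

lemma split_monomial: "(k::'w \<Rightarrow>\<^sub>0 nat) \<noteq> 0 \<Longrightarrow> \<exists>u k'. k = sg u 1 + k'"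
proof -
  assume "k \<noteq> 0"
  then obtain u where u: "u \<in> ks k" by (metis all_not_in_conv keys_eq_empty)
  define k' where "k' = Poly_Mapping.update u (lk k u - 1) k"
  have "k = sg u 1 + k'"
    using u by (intro poly_mapping_eqI) (auto simp: k'_def lookup_add lookup_update lookup_single when_def in_keys_iff)
  then show ?thesis by blast
qed

locale setting =
  fixes A :: "('v::finite, 'a::idom) mpoly set"
    and \<pi> :: "('v, 'a) mpoly \<Rightarrow> ('v, 'a) mpoly"
  assumes sub: "r_subalgebra A"
    and gr: "graded_set A"
    and ret: "retraction \<pi> A"
    and pos: "\<pi> ` posPart \<subseteq> posPart"
begin

lemma A_mconst: "mconst c \<in> A" using sub by (simp add: r_subalgebra_def)
lemma A_add: "p \<in> A \<Longrightarrow> q \<in> A \<Longrightarrow> p + q \<in> A" using sub by (simp add: r_subalgebra_def)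
lemma A_mult: "p \<in> A \<Longrightarrow> q \<in> A \<Longrightarrow> p * q \<in> A" using sub by (simp add: r_subalgebra_def)
lemma A_zero: "0 \<in> A" using A_mconst[of 0] by simp
lemma A_one: "1 \<in> A" using A_mconst[of 1] by simp
lemma A_hcomp: "p \<in> A \<Longrightarrow> hcomp i p \<in> A" using gr by (simp add: graded_set_def)
lemma A_sum: "(\<And>x. x \<in> S \<Longrightarrow> f x \<in> A) \<Longrightarrow> sum f S \<in> A"
  by (induction S rule: infinite_finite_induct) (auto intro: A_add A_zero)
lemma A_prod: "(\<And>x. x \<in> S \<Longrightarrow> f x \<in> A) \<Longrightarrow> prod f S \<in> A"
  by (induction S rule: infinite_finite_induct) (auto intro: A_mult A_one)
lemma A_pow: "p \<in> A \<Longrightarrow> p ^ n \<in> A"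
  by (induction n) (auto intro: A_mult A_one)

lemma pi_add: "\<pi> (p + q) = \<pi> p + \<pi> q" using ret by (simp add: retraction_def)
lemma pi_mult: "\<pi> (p * q) = \<pi> p * \<pi> q" using ret by (simp add: retraction_def)
lemma pi_in: "\<pi> p \<in> A" using ret by (auto simp: retraction_def)
lemma pi_id: "a \<in> A \<Longrightarrow> \<pi> a = a" using ret by (simp add: retraction_def)
lemma pi_zero: "\<pi> 0 = 0" using pi_add[of 0 0] by simp
lemma pi_sum: "\<pi> (sum f S) = (\<Sum>x\<in>S. \<pi> (f x))"
  by (induction S rule: infinite_finite_induct) (auto simp: pi_add pi_zero)
lemma pi_mconst_mult: "\<pi> (mconst c * p) = mconst c * \<pi> p"
  by (simp add: pi_mult pi_id A_mconst)

definition "M = A \<inter> homog 1"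
definition "P b = hcomp 1 (\<pi> b)"

lemma P_in: "P b \<in> M" by (simp add: P_def M_def A_hcomp pi_in hcomp_homog)
lemma P_add: "P (p + q) = P p + P q" by (simp add: P_def pi_add hcomp_add)
lemma P_mconst: "P (mconst c * p) = mconst c * P p" by (simp add: P_def pi_mconst_mult hcomp_mconst_mult)
lemma P_id: "m \<in> M \<Longrightarrow> P m = m" by (simp add: P_def M_def pi_id homog_hcomp_same)
lemma P_zero: "P 0 = 0" by (simp add: P_def pi_zero)
lemma P_uminus: "P (- p) = - P p" using P_add[of p "-p"] P_zero by (simp add: eq_neg_iff_add_eq_0 add.commute)
lemma P_diff: "P (p - q) = P p - P q" using P_add[of p "-q"] P_uminus[of q] by simp

lemma M_sub: "r_submodule M"
proof -
  have "0 \<in> homog 1" by (simp add: homog_def)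
  then show ?thesis unfolding r_submodule_def M_def
    by (auto intro: A_zero A_add A_mult A_mconst homog_add mconst_homog)
qed

lemma M_mconst: "m \<in> M \<Longrightarrow> mconst c * m \<in> M"
  using M_sub by (simp add: r_submodule_def)
lemma M_add: "m \<in> M \<Longrightarrow> m' \<in> M \<Longrightarrow> m + m' \<in> M"
  using M_sub by (simp add: r_submodule_def)
lemma M_zero: "0 \<in> M"
  using M_sub by (simp add: r_submodule_def)

lemma direct: "direct_summand_B1 M"
proof -
  define N where "N = {b \<in> homog 1. P b = 0}"
  have "r_submodule N"
    unfolding r_submodule_def N_def
    by (auto simp: P_zero P_add P_mconst intro: homog_add mconst_homog) (simp add: homog_def)
  moreover have "N \<subseteq> homog 1" by (auto simp: N_def)
  moreover have "M \<inter> N = {0}"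
    using P_id M_zero P_zero by (auto simp: N_def M_def homog_def)
  moreover have "\<forall>p\<in>homog 1. \<exists>a\<in>M. \<exists>b\<in>N. p = a + b"
  proof
    fix p :: "('v,'a) mpoly" assume p: "p \<in> homog 1"
    have "P p \<in> homog 1" using P_in by (simp add: M_def)
    then have "p - P p \<in> homog 1" using p homog_add[OF p uminus_homog] by simp
    moreover have "P (p - P p) = 0" by (simp add: P_diff P_id P_in)
    ultimately show "\<exists>a\<in>M. \<exists>b\<in>N. p = a + b" using P_in by (auto simp: N_def intro!: bexI[of _ "P p"])
  qed
  ultimately show ?thesis using M_sub by (auto simp: direct_summand_B1_def M_def)
qed

end

context setting begin

abbreviation "G \<equiv> alg_gen M"

lemma G_zero: "0 \<in> G" using alg_gen.gen_const[of 0 M] by simp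
lemma G_sum: "(\<And>x. x \<in> S \<Longrightarrow> f x \<in> G) \<Longrightarrow> sum f S \<in> G"
  by (induction S rule: infinite_finite_induct) (auto intro: alg_gen.gen_add G_zero)

lemma G_sub_A: "p \<in> G \<Longrightarrow> p \<in> A"
  by (induction p rule: alg_gen.induct) (auto intro: A_mconst A_add A_mult simp: M_def)

lemma L:
  assumes IH: "\<And>j a. j < d \<Longrightarrow> a \<in> A \<Longrightarrow> a \<in> homog j \<Longrightarrow> a \<in> G"
    and u: "u \<in> A" "u \<in> posPart" and w: "w \<in> A" "w \<in> posPart"
  shows "hcomp d (u * w) \<in> G"
proof -
  obtain N1 where N1: "\<forall>m\<in>ks u. mdeg m \<le> N1" using exists_bound by blast
  obtain N2 where N2: "\<forall>m\<in>ks w. mdeg m \<le> N2" using exists_bound by blast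
  let ?N = "max N1 N2"
  have b1: "\<forall>m\<in>ks u. mdeg m \<le> ?N" and b2: "\<forall>m\<in>ks w. mdeg m \<le> ?N" using N1 N2 by force+
  show ?thesis unfolding hcomp_mult[OF b1 b2]
  proof (intro G_sum)
    fix i j
    show "(if i + j = d then hcomp i u * hcomp j w else 0) \<in> G"
    proof (cases "i + j = d")
      case True
      show ?thesis
      proof (cases "i = 0 \<or> j = 0")
        case True
        then have "hcomp i u * hcomp j w = 0" using posPart_hcomp0[OF u(2)] posPart_hcomp0[OF w(2)] by auto
        then show ?thesis using G_zero by simp
      next
        case False
        then have "i < d" "j < d" using \<open>i + j = d\<close> by auto
        then have "hcomp i u \<in> G" "hcomp j w \<in> G"
          using IH[OF _ A_hcomp[OF u(1)] hcomp_homog] IH[OF _ A_hcomp[OF w(1)] hcomp_homog] by auto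
        then show ?thesis using \<open>i + j = d\<close> by (simp add: alg_gen.gen_mult)
      qed
    qed (simp add: G_zero)
  qed
qed

lemma homog_in_G: "a \<in> A \<Longrightarrow> a \<in> homog d \<Longrightarrow> a \<in> G"
proof (induction d arbitrary: a rule: less_induct)
  case (less d)
  show ?case
  proof (cases "d \<le> 1")
    case True
    then consider "d = 0" | "d = 1" by linarith
    then show ?thesis
    proof cases
      case 1
      then have "a \<in> homog 0" using less.prems by simp
      then have "a = mconst (lk a 0)" by (rule homog0_const)
      then show ?thesis using alg_gen.gen_const[of "lk a 0" M] by simp
    next
      case 2
      then have "a \<in> M" using less.prems by (simp add: M_def)
      then show ?thesis by (rule alg_gen.gen_base)
    qed
  next
    case False
    have ha: "hcomp d a = a" using homog_hcomp_same less.prems by blast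
    have "a = hcomp d (\<pi> a)" using ha pi_id[OF less.prems(1)] by simp
    also have "\<dots> = hcomp d (\<pi> (\<Sum>k\<in>ks a. sg k (lk a k)))" by (simp only: expand)
    also have "\<dots> = (\<Sum>k\<in>ks a. hcomp d (\<pi> (sg k (lk a k))))" by (simp add: pi_sum hcomp_sum)
    finally have aeq: "a = \<dots>" .
    have "hcomp d (\<pi> (sg k (lk a k))) \<in> G" if k: "k \<in> ks a" for k
    proof -
      have dk: "mdeg k = d" using k less.prems by (auto simp: homog_def)
      have "k \<noteq> 0"
      proof
        assume "k = 0" then have "mdeg k = 0" by (simp add: mdeg_def)
        then show False using dk False by simp
      qed
      then obtain u k' where kk: "k = sg u 1 + k'" using split_monomial by blast
      have "mdeg k' = d - 1" using dk kk by (simp add: mdeg_add mdeg_single)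
      then have "k' \<noteq> 0"
      proof -
        assume "mdeg k' = d - 1"
        show "k' \<noteq> 0"
        proof
          assume "k' = 0" then have "mdeg k' = 0" by (simp add: mdeg_def)
          then show False using \<open>mdeg k' = d - 1\<close> False by simp
        qed
      qed
      then have k'pos: "sg k' (lk a k) \<in> posPart" by (simp add: posPart_def lookup_single when_def)
      have "sg k (lk a k) = mvar u * sg k' (lk a k)" by (simp add: kk mvar_def mult_single)
      then have "\<pi> (sg k (lk a k)) = \<pi> (mvar u) * \<pi> (sg k' (lk a k))" by (simp add: pi_mult)
      moreover have "\<pi> (mvar u) \<in> posPart" by (rule subsetD[OF pos imageI[OF mvar_posPart]])
      moreover have "\<pi> (sg k' (lk a k)) \<in> posPart" by (rule subsetD[OF pos imageI[OF k'pos]])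
      ultimately show ?thesis using L[OF less.IH pi_in[of "mvar u"] _ pi_in[of "sg k' (lk a k)"]] by simp
    qed
    then have "(\<Sum>k\<in>ks a. hcomp d (\<pi> (sg k (lk a k)))) \<in> G" by (intro G_sum)
    then show ?thesis by (subst aeq)
  qed
qed

lemma alg_gen_eq: "alg_gen M = A"
proof
  show "G \<subseteq> A" using G_sub_A by blast
  show "A \<subseteq> G"
  proof
    fix a assume a: "a \<in> A"
    obtain N where N: "\<forall>m\<in>ks a. mdeg m \<le> N" using exists_bound by blast
    have "a = (\<Sum>i\<le>N. hcomp i a)" by (rule hcomp_decomp[OF N])
    also have "\<dots> \<in> G" by (intro G_sum homog_in_G[OF A_hcomp[OF a] hcomp_homog])
    finally show "a \<in> G" .
  qed
qed

end

context setting begin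

lemma M_A: "m \<in> M \<Longrightarrow> m \<in> A" by (simp add: M_def)

lemma peval_id_A: "q \<in> sym_polys M \<Longrightarrow> peval id q \<in> A"
  unfolding peval_def
  by (intro A_sum A_mult A_mconst A_prod A_pow) (auto simp: sym_polys_def intro: M_A)

lemma img: "peval id ` sym_polys M = A"
proof
  show "peval id ` sym_polys M \<subseteq> A" using peval_id_A by blast
  have "a \<in> peval id ` sym_polys M" if "a \<in> G" for a
    using that
  proof (induction a rule: alg_gen.induct)
    case (gen_const c)
    then show ?case using sp_mconst[of c M] peval_mconst[of id c] by (metis image_eqI)
  next
    case (gen_base s)
    then show ?case using sp_mvar[of s M] peval_mvar[of id s] by (metis id_apply image_eqI)
  next
    case (gen_add p q)
    then obtain p' q' where "p' \<in> sym_polys M" "q' \<in> sym_polys M" "p = peval id p'" "q = peval id q'" by blast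
    then show ?case by (metis image_eqI peval_add sp_add)
  next
    case (gen_mult p q)
    then obtain p' q' where "p' \<in> sym_polys M" "q' \<in> sym_polys M" "p = peval id p'" "q = peval id q'" by blast
    then show ?case by (metis image_eqI peval_mult sp_mult)
  qed
  then show "A \<subseteq> peval id ` sym_polys M" using alg_gen_eq by blast
qed

lemma gens_zero: "g \<in> sym_gens M \<Longrightarrow> peval id g = 0"
  by (auto simp: sym_gens_def peval_diff peval_mvar peval_mult peval_mconst)

lemma ideal_zero_eval: "q \<in> sym_ideal M \<Longrightarrow> peval id q = 0"
proof (induction q rule: sym_ideal.induct)
  case (ideal_step q g a)
  then have "peval id g = 0" by (intro gens_zero)
  then show ?case using ideal_step.IH by (simp only: peval_add peval_mult) simp
qed simp

definition "psi = peval (\<lambda>v. mvar (P (mvar v)))"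

lemma psi_sp: "psi b \<in> sym_polys M"
  unfolding psi_def by (rule peval_sp) (rule sp_mvar[OF P_in])

lemma gen1: "a \<in> M \<Longrightarrow> b \<in> M \<Longrightarrow> mvar (a + b) - mvar a - mvar b \<in> sym_ideal M"
  by (rule I_gen) (auto simp: sym_gens_def)
lemma gen2: "a \<in> M \<Longrightarrow> mvar (mconst c * a) - mconst c * mvar a \<in> sym_ideal M"
  by (rule I_gen) (auto simp: sym_gens_def)

lemma Klemma:
  assumes "finite K"
  shows "(\<Sum>k\<in>K. mconst (c k) * mvar (P (sg k 1))) - mvar (P (\<Sum>k\<in>K. sg k (c k))) \<in> sym_ideal M"
  using assms
proof (induction K rule: finite_induct)
  case empty
  have "mvar (0 + 0) - mvar 0 - mvar 0 \<in> sym_ideal M" by (rule gen1[OF M_zero M_zero])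
  then show ?case by (simp add: P_zero)
next
  case (insert x K)
  let ?S = "\<Sum>k\<in>K. sg k (c k)"
  let ?P1 = "P (sg x 1)"
  have sx: "sg x (c x) = mconst (c x) * sg x 1" by (simp add: mconst_single)
  have Pins: "P (sg x (c x) + ?S) = mconst (c x) * ?P1 + P ?S"
    by (simp only: P_add sx P_mconst)
  have g1: "mvar (mconst (c x) * ?P1) - mconst (c x) * mvar ?P1 \<in> sym_ideal M" by (rule gen2[OF P_in])
  have g2: "mvar (mconst (c x) * ?P1 + P ?S) - mvar (mconst (c x) * ?P1) - mvar (P ?S) \<in> sym_ideal M"
    by (rule gen1[OF M_mconst[OF P_in] P_in])
  have eq: "(\<Sum>k\<in>insert x K. mconst (c k) * mvar (P (sg k 1))) - mvar (P (\<Sum>k\<in>insert x K. sg k (c k)))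
    = ((\<Sum>k\<in>K. mconst (c k) * mvar (P (sg k 1))) - mvar (P ?S))
      - (mvar (mconst (c x) * ?P1) - mconst (c x) * mvar ?P1)
      - (mvar (mconst (c x) * ?P1 + P ?S) - mvar (mconst (c x) * ?P1) - mvar (P ?S))"
    using insert by (simp add: Pins algebra_simps)
  show ?case unfolding eq by (intro I_diff insert.IH g1 g2)
qed

lemma psi_M: assumes m: "m \<in> M" shows "psi m - mvar m \<in> sym_ideal M"
proof -
  have h1: "m \<in> homog 1" using m by (simp add: M_def)
  have "psi m = (\<Sum>k\<in>ks m. mconst (lk m k) * mon (\<lambda>v. mvar (P (mvar v))) k)"
    unfolding psi_def peval_def mon_def ..
  also have "\<dots> = (\<Sum>k\<in>ks m. mconst (lk m k) * mvar (P (sg k 1)))"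
  proof (rule sum.cong[OF refl])
    fix k assume "k \<in> ks m"
    then have "mdeg k = 1" using h1 by (simp add: homog_def)
    then obtain u where u: "k = sg u 1" using mdeg_one by blast
    show "mconst (lk m k) * mon (\<lambda>v. mvar (P (mvar v))) k = mconst (lk m k) * mvar (P (sg k 1))"
      unfolding u mon_single1 by (simp add: mvar_def)
  qed
  finally have pm: "psi m = \<dots>" .
  have mv: "mvar m = mvar (P (\<Sum>k\<in>ks m. sg k (lk m k)))" by (simp add: expand P_id m)
  show ?thesis by (subst pm, subst mv) (rule Klemma, simp)
qed

lemma key: assumes q: "q \<in> sym_polys M" shows "psi (peval id q) - q \<in> sym_ideal M"
proof -
  have e1: "psi (peval id q) = (\<Sum>m\<in>ks q. mconst (lk q m) * (\<Prod>v\<in>ks m. psi v ^ lk m v))"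
    unfolding peval_def[of id q] psi_def
    by (simp add: peval_sum peval_mult peval_mconst peval_prod peval_pow)
  have e2: "q = (\<Sum>m\<in>ks q. mconst (lk q m) * (\<Prod>v\<in>ks m. mvar v ^ lk m v))"
    using peval_mvar_id[of q] by (simp add: peval_def)
  have "psi (peval id q) - q = (\<Sum>m\<in>ks q. mconst (lk q m) * ((\<Prod>v\<in>ks m. psi v ^ lk m v) - (\<Prod>v\<in>ks m. mvar v ^ lk m v)))"
    by (subst e1, subst (2) e2) (simp add: sum_subtractf right_diff_distrib)
  also have "\<dots> \<in> sym_ideal M"
  proof (intro I_sum)
    fix m assume m: "m \<in> ks q"
    have "(\<Prod>v\<in>ks m. psi v ^ lk m v) - (\<Prod>v\<in>ks m. (mvar v :: (('v,'a) mpoly,'a) mpoly) ^ lk m v) \<in> sym_ideal M"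
    proof (rule I_prod)
      fix v assume "v \<in> ks m"
      then have vM: "v \<in> M" using q m by (auto simp: sym_polys_def)
      show "psi v ^ lk m v - (mvar v :: (('v,'a) mpoly,'a) mpoly) ^ lk m v \<in> sym_ideal M \<and> psi v ^ lk m v \<in> sym_polys M \<and> (mvar v :: (('v,'a) mpoly,'a) mpoly) ^ lk m v \<in> sym_polys M"
      proof (intro conjI)
        have mv: "(mvar v :: (('v,'a) mpoly,'a) mpoly) \<in> sym_polys M" by (rule sp_mvar[OF vM])
        show "psi v ^ lk m v - (mvar v :: (('v,'a) mpoly,'a) mpoly) ^ lk m v \<in> sym_ideal M" by (rule I_pow[OF psi_M[OF vM] psi_sp mv])
        show "psi v ^ lk m v \<in> sym_polys M" by (rule sp_pow[OF psi_sp])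
        show "(mvar v :: (('v,'a) mpoly,'a) mpoly) ^ lk m v \<in> sym_polys M" by (rule sp_pow[OF mv])
      qed
    qed
    then show "mconst (lk q m) * ((\<Prod>v\<in>ks m. psi v ^ lk m v) - (\<Prod>v\<in>ks m. (mvar v :: (('v,'a) mpoly,'a) mpoly) ^ lk m v)) \<in> sym_ideal M"
      by (rule I_mult) (rule sp_mconst)
  qed
  finally show ?thesis .
qed

lemma iso: "sym_iso M A"
  unfolding sym_iso_def
proof (intro conjI ballI img)
  fix q :: "(('v,'a) mpoly, 'a) mpoly" assume q: "q \<in> sym_polys M"
  show "(peval id q = 0) = (q \<in> sym_ideal M)"
  proof
    assume "peval id q = 0"
    then have "- q \<in> sym_ideal M" using key[OF q] by (simp add: psi_def)
    then have "- (- q) \<in> sym_ideal M" by (rule I_uminus)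
    then show "q \<in> sym_ideal M" by simp
  qed (rule ideal_zero_eval)
qed

end

theorem theorem5p13:
  fixes A :: "('v::finite, 'a::idom) mpoly set"
    and \<pi> :: "('v, 'a) mpoly \<Rightarrow> ('v, 'a) mpoly"
  assumes "r_subalgebra A"
    and "graded_set A"
    and "retraction \<pi> A"
    and "\<pi> ` posPart \<subseteq> posPart"
  shows "\<exists>M. direct_summand_B1 M \<and> alg_gen M = A \<and> sym_iso M A"
proof -
  interpret setting A \<pi> using assms by unfold_locales
  show ?thesis using direct alg_gen_eq iso by blast
qed

end
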